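(* Let $t>1$ and let $U:[-2\pi,2\pi]\to\mathbb{R}$ be given by \[ U(x)=\begin{cases}-\sin(\Psi_t^{-1}(x+2\pi)), & x<0,\\ -\sin(\Psi_t^{-1}(x)), & x\ge0.\end{cases} \] There exists $C=C(t)>0$ such that for any $\epsilon\in(0,\tfrac12]$ there exists a ReLU neural network $\Phi_\epsilon:\mathbb{R}\to\mathbb{R}$ with $\mathrm{depth}(\Phi_\epsilon)\le C\log(\epsilon^{-1})^2$, $\mathrm{width}(\Phi_\epsilon)\le C$ and $\|\Phi_\epsilon-U\|_{L^1([-2\pi,2\pi])}\le\epsilon$.
   Context: For $t>1$, let $x_t\in(0,\pi)$ be the unique positive solution of $x_t=t\sin(x_t)$ and $\Psi_t:[x_t,2\pi-x_t]\to[0,2\pi]$, $\Psi_t(x_0)=x_0-t\sin(x_0)$ (a bijection with inverse $\Psi_t^{-1}$). For a ReLU network, depth is the number of hidden layers and width the maximal number of neurons in a hidden layer. *)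

theory Defs
  imports "HOL-Analysis.Analysis"
begin

definition xt :: "real \<Rightarrow> real" where
  "xt t = (THE x. 0 < x \<and> x < pi \<and> x = t * sin x)"

definition Psi :: "real \<Rightarrow> real \<Rightarrow> real" where
  "Psi t y = y - t * sin y"

definition Psi_inv :: "real \<Rightarrow> real \<Rightarrow> real" where
  "Psi_inv t x = (THE y. y \<in> {xt t .. 2*pi - xt t} \<and> Psi t y = x)"

definition U :: "real \<Rightarrow> real \<Rightarrow> real" where
  "U t x = (if x < 0 then - sin (Psi_inv t (x + 2*pi)) else - sin (Psi_inv t x))"

text \<open>A network is a nonempty list of layers; all but the last are hidden layers
  (followed by ReLU), the last is the affine output layer.\<close>
type_synonym layer = "real list list \<times> real list"

fun affine :: "layer \<Rightarrow> real list \<Rightarrow> real list" where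
  "affine (W, b) v = map2 (\<lambda>row bi. (\<Sum>(a, x)\<leftarrow>zip row v. a * x) + bi) W b"

definition relu_vec :: "real list \<Rightarrow> real list" where
  "relu_vec v = map (\<lambda>x. max 0 x) v"

fun realize_layers :: "layer list \<Rightarrow> real list \<Rightarrow> real list" where
  "realize_layers [] v = v"
| "realize_layers [l] v = affine l v"
| "realize_layers (l # l' # ls) v = realize_layers (l' # ls) (relu_vec (affine l v))"

fun wf_from :: "nat \<Rightarrow> layer list \<Rightarrow> bool" where
  "wf_from d [] = (d = 1)"
| "wf_from d ((W, b) # ls) =
     (length W = length b \<and> (\<forall>r\<in>set W. length r = d) \<and> wf_from (length W) ls)"

definition valid_net :: "layer list \<Rightarrow> bool" where
  "valid_net N \<longleftrightarrow> N \<noteq> [] \<and> wf_from 1 N"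

definition realization :: "layer list \<Rightarrow> real \<Rightarrow> real" where
  "realization N x = hd (realize_layers N [x])"

definition depth :: "layer list \<Rightarrow> nat" where
  "depth N = length N - 1"

definition width :: "layer list \<Rightarrow> nat" where
  "width N = Max (insert 0 (set (map (\<lambda>l. length (fst l)) (butlast N))))"

end

theory Submission
  imports Defs
begin


lemma Psi_deriv: "(Psi t has_real_derivative (1 - t * cos y)) (at y)"
  unfolding Psi_def by (auto intro!: derivative_eq_intros)

lemma Psi_cont: "continuous_on S (Psi t)"
  unfolding Psi_def by (intro continuous_intros)

lemma Psi_rolle:
  assumes "a < b" "Psi t a = Psi t b"
  shows "\<exists>z. a < z \<and> z < b \<and> t * cos z = 1"
proof -
  obtain z where z: "a < z" "z < b" "DERIV (Psi t) z :> 0"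
    using Rolle[OF assms Psi_cont] Psi_deriv real_differentiable_def by blast
  have "1 - t * cos z = 0" using DERIV_unique[OF Psi_deriv z(3)] .
  with z show ?thesis by auto
qed

lemma xt_ex1:
  assumes t: "t > 1"
  shows "\<exists>!x. 0 < x \<and> x < pi \<and> x = t * sin x"
proof (rule ex_ex1I)
  have d: "((\<lambda>x. t * sin x - x) has_real_derivative (t - 1)) (at 0)"
    by (auto intro!: derivative_eq_intros)
  obtain d where d0: "d > 0" and dd: "\<And>h. h > 0 \<Longrightarrow> h < d \<Longrightarrow> t * sin 0 - 0 < t * sin (0+h) - (0+h)"
    using DERIV_pos_inc_right[OF d] t by auto
  define a where "a = min (d/2) (pi/2)"
  have "pi/2 < pi" using pi_gt_zero by linarith
  moreover have "a \<le> pi/2" "a \<le> d/2" unfolding a_def by auto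
  moreover have "0 < a" using d0 pi_gt_zero unfolding a_def by auto
  ultimately have a: "0 < a" "a < d" "a < pi" using d0 by linarith+
  have ga: "0 \<le> t * sin a - a" using dd[OF a(1) a(2)] by simp
  have gpi: "t * sin pi - pi \<le> 0" by simp
  obtain x where x: "a \<le> x" "x \<le> pi" "t * sin x - x = 0"
  proof -
    have c: "continuous_on {a..pi} (\<lambda>x. t * sin x - x)" by (intro continuous_intros)
    show ?thesis using IVT2'[of "\<lambda>x. t * sin x - x" pi 0 a, OF gpi ga _ c] a that by auto
  qed
  have "x \<noteq> pi" using x(3) by auto
  then show "\<exists>x. 0 < x \<and> x < pi \<and> x = t * sin x" using x a by (intro exI[of _ x]) auto
next
  fix y x assume y: "0 < y \<and> y < pi \<and> y = t * sin y"
   and x: "0 < x \<and> x < pi \<and> x = t * sin x"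
  show "y = x"
  proof (rule ccontr)
    assume ne: "y \<noteq> x"
    have key: "\<And>a b. 0 < a \<Longrightarrow> a < b \<Longrightarrow> b < pi \<Longrightarrow> a = t * sin a \<Longrightarrow> b = t * sin b \<Longrightarrow> False"
    proof -
      fix a b :: real assume h: "0 < a" "a < b" "b < pi" "a = t * sin a" "b = t * sin b"
      have "Psi t 0 = Psi t a" using h by (simp add: Psi_def)
      then obtain z1 where z1: "0 < z1" "z1 < a" "t * cos z1 = 1" using Psi_rolle h by blast
      have "Psi t a = Psi t b" using h by (simp add: Psi_def)
      then obtain z2 where z2: "a < z2" "z2 < b" "t * cos z2 = 1" using Psi_rolle h by blast
      have "cos z2 < cos z1" using cos_mono_less_eq[of z2 z1] z1 z2 h by auto
      moreover have "cos z1 = cos z2" using z1(3) z2(3) t by (metis mult_cancel_left not_one_less_zero order_less_trans zero_less_one mult_zero_left)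
      ultimately show False by simp
    qed
    show False
    proof (cases "y < x")
      case True then show ?thesis using key[of y x] x y by auto
    next
      case False then show ?thesis using key[of x y] x y ne by auto
    qed
  qed
qed

lemma xt_prop:
  assumes t: "t > 1"
  shows "0 < xt t" "xt t < pi" "xt t = t * sin (xt t)"
  using theI'[OF xt_ex1[OF t]] unfolding xt_def by auto

lemma xt_cos:
  assumes t: "t > 1"
  shows "t * cos (xt t) < 1"
proof -
  have "Psi t 0 = Psi t (xt t)" using xt_prop[OF t] by (simp add: Psi_def)
  then obtain z where z: "0 < z" "z < xt t" "t * cos z = 1" using Psi_rolle xt_prop[OF t] by blast
  have "cos (xt t) < cos z" using cos_mono_less_eq[of "xt t" z] z xt_prop[OF t] by auto
  then have "t * cos (xt t) < t * cos z" using t by simp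
  then show ?thesis using z by simp
qed

lemma cos_le_xt:
  assumes t: "t > 1" and y: "xt t \<le> y" "y \<le> 2*pi - xt t"
  shows "cos y \<le> cos (xt t)"
proof (cases "y \<le> pi")
  case True
  then show ?thesis using cos_monotone_0_pi_le[of "xt t" y] xt_prop[OF t] y by auto
next
  case False
  have "cos y = cos (2*pi - y)" by (simp add: cos_diff)
  also have "\<dots> \<le> cos (xt t)" using cos_monotone_0_pi_le[of "xt t" "2*pi - y"] xt_prop[OF t] y False by auto
  finally show ?thesis .
qed

lemma Psi_strict_mono:
  assumes t: "t > 1" and ab: "xt t \<le> a" "a < b" "b \<le> 2*pi - xt t"
  shows "Psi t a < Psi t b"
proof (rule DERIV_pos_imp_increasing[OF ab(2)])
  fix x assume x: "a \<le> x" "x \<le> b"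
  have "cos x \<le> cos (xt t)" using cos_le_xt[OF t, of x] x ab by auto
  then have "t * cos x \<le> t * cos (xt t)" using t by simp
  then have "1 - t * cos x > 0" using xt_cos[OF t] by simp
  then show "\<exists>y. DERIV (Psi t) x :> y \<and> y > 0" using Psi_deriv by blast
qed

lemma Psi_mono:
  assumes t: "t > 1" and ab: "xt t \<le> a" "a \<le> b" "b \<le> 2*pi - xt t"
  shows "Psi t a \<le> Psi t b"
  using Psi_strict_mono[OF t, of a b] ab by (cases "a = b") auto

lemma Psi_ends:
  assumes t: "t > 1"
  shows "Psi t (xt t) = 0" "Psi t (2*pi - xt t) = 2*pi"
  using xt_prop[OF t] by (auto simp: Psi_def sin_diff)

lemma Psi_inv_prop:
  assumes t: "t > 1" and z: "0 \<le> z" "z \<le> 2*pi"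
  shows "xt t \<le> Psi_inv t z" "Psi_inv t z \<le> 2*pi - xt t" "Psi t (Psi_inv t z) = z"
proof -
  have le: "xt t \<le> 2*pi - xt t" using xt_prop[OF t] by simp
  obtain y where y: "xt t \<le> y" "y \<le> 2*pi - xt t" "Psi t y = z"
    using IVT'[of "Psi t" "xt t" z "2*pi - xt t"] Psi_ends[OF t] z le Psi_cont by auto
  have ex: "\<exists>!y. y \<in> {xt t .. 2*pi - xt t} \<and> Psi t y = z"
  proof (rule ex1I[of _ y])
    show "y \<in> {xt t .. 2*pi - xt t} \<and> Psi t y = z" using y by auto
  next
    fix w assume w: "w \<in> {xt t .. 2*pi - xt t} \<and> Psi t w = z"
    show "w = y"
    proof (rule ccontr)
      assume "w \<noteq> y"
      then consider "w < y" | "y < w" by linarith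
      then show False
        using Psi_strict_mono[OF t, of w y] Psi_strict_mono[OF t, of y w] w y by (cases; auto)
    qed
  qed
  show "xt t \<le> Psi_inv t z" "Psi_inv t z \<le> 2*pi - xt t" "Psi t (Psi_inv t z) = z"
    using theI'[OF ex] unfolding Psi_inv_def by auto
qed

lemma Psi_inv_mono:
  assumes t: "t > 1" and z: "0 \<le> z" "z \<le> w" "w \<le> 2*pi"
  shows "Psi_inv t z \<le> Psi_inv t w"
proof (rule ccontr)
  assume "\<not> ?thesis"
  then have "Psi t (Psi_inv t w) < Psi t (Psi_inv t z)"
    using Psi_strict_mono[OF t, of "Psi_inv t w" "Psi_inv t z"] Psi_inv_prop[OF t, of z] Psi_inv_prop[OF t, of w] z by auto
  then show False using Psi_inv_prop[OF t, of z] Psi_inv_prop[OF t, of w] z by auto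
qed

definition hh :: "real \<Rightarrow> real" where "hh t = 2*pi - 2 * xt t"
definition al :: "real \<Rightarrow> nat \<Rightarrow> real" where "al t j = hh t / 2^j"

lemma al_Suc: "al t j = 2 * al t (Suc j)"
  unfolding al_def by simp

fun ys :: "real \<Rightarrow> real \<Rightarrow> nat \<Rightarrow> real" where
  "ys t z 0 = xt t"
| "ys t z (Suc j) = (if Psi t (ys t z j + al t (Suc j)) < z then ys t z j + al t (Suc j) else ys t z j)"

lemma bis_inv:
  assumes t: "t > 1" and z: "0 \<le> z" "z \<le> 2*pi"
  shows "xt t \<le> ys t z j \<and> ys t z j \<le> Psi_inv t z \<and> Psi_inv t z \<le> ys t z j + al t j
         \<and> ys t z j + al t j \<le> 2*pi - xt t"
proof (induction j)
  case 0
  then show ?case using Psi_inv_prop[OF t z] by (simp add: al_def hh_def)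
next
  case (Suc j)
  define q where "q = ys t z j + al t (Suc j)"
  have a2: "al t j = 2 * al t (Suc j)" by (rule al_Suc)
  have apos: "0 \<le> al t (Suc j)" unfolding al_def hh_def using xt_prop[OF t] by simp
  note r = Psi_inv_prop[OF t z]
  show ?case
  proof (cases "Psi t q < z")
    case True
    have "q < Psi_inv t z"
    proof (rule ccontr)
      assume "\<not> q < Psi_inv t z"
      then have "Psi t (Psi_inv t z) \<le> Psi t q"
        using Psi_mono[OF t, of "Psi_inv t z" q] r Suc a2 apos unfolding q_def by auto
      then show False using True r by simp
    qed
    then show ?thesis using True Suc a2 apos unfolding q_def by auto
  next
    case False
    have "Psi_inv t z \<le> q"
    proof (rule ccontr)
      assume "\<not> Psi_inv t z \<le> q"
      then have "Psi t q < Psi t (Psi_inv t z)"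
        using Psi_strict_mono[OF t, of q "Psi_inv t z"] r Suc a2 apos unfolding q_def by auto
      then show False using False r by simp
    qed
    then show ?thesis using False Suc a2 apos unfolding q_def by auto
  qed
qed

lemma ys_grid: "\<exists>m::nat. m < (2::nat)^j \<and> ys t z j = xt t + m * al t j"
proof (induction j)
  case 0 then show ?case by simp
next
  case (Suc j)
  then obtain m :: nat where m: "m < (2::nat)^j" "ys t z j = xt t + m * al t j" by blast
  have a2: "al t j = 2 * al t (Suc j)" by (rule al_Suc)
  show ?case
  proof (cases "Psi t (ys t z j + al t (Suc j)) < z")
    case True
    then show ?thesis using m a2 by (intro exI[of _ "2*m+1"]) (auto simp: algebra_simps)
  next
    case False
    then show ?thesis using m a2 by (intro exI[of _ "2*m"]) (auto simp: algebra_simps)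
  qed
qed



definition relu :: "real \<Rightarrow> real" where "relu x = max 0 x"

definition hid :: "layer list \<Rightarrow> real list \<Rightarrow> real list" where
  "hid ls v = foldl (\<lambda>v l. relu_vec (affine l v)) v ls"

definition L1 :: "real \<Rightarrow> real \<Rightarrow> real \<Rightarrow> layer" where
  "L1 t d a = (let k = (- a - t * cos a - t * sin a) / d in
    ([[1,0,0,0,0,0,0,0],[0,1,0,0,0,0,0,0],[0,0,1,0,0,0,0,0],[0,0,0,1,0,0,0,0],
      [1/d, -1/d, t * cos a / d, t * sin a / d, 0,0,0,0],
      [1/d, -1/d, t * cos a / d, t * sin a / d, 0,0,0,0],
      [0,0,0,0,0,0,0,0],[0,0,0,0,0,0,0,0]],
     [0,0,0,0,k,k - 1,0,0]))"

lemma L1_eval: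
  "relu_vec (affine (L1 t d a) [z,y,S,C,e4,e5,e6,e7]) =
    [max 0 z, max 0 y, max 0 S, max 0 C,
     max 0 ((z - y - a + t * cos a * (S - 1) + t * sin a * (C - 1))/d),
     max 0 ((z - y - a + t * cos a * (S - 1) + t * sin a * (C - 1))/d - 1), 0, 0]"
  by (simp add: L1_def relu_vec_def Let_def add_divide_distrib diff_divide_distrib algebra_simps)

definition L2 :: "real \<Rightarrow> layer" where
  "L2 a = (let ca = cos a; sa = sin a in
    ([[1,0,0,0,0,0,0,0],[0,1,0,0,a,-a,0,0],[0,0,1,0,0,0,0,0],[0,0,0,1,0,0,0,0],
      [0,0,ca-1,sa,2,-2,0,0],[0,0,1-ca,-sa,2,-2,0,0],
      [0,0,-sa,ca-1,2,-2,0,0],[0,0,sa,1-ca,2,-2,0,0]],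
     [0,0,0,0, 1-ca-sa-2, ca-1+sa-2, sa+1-ca-2, -sa-1+ca-2]))"

lemma L2_eval:
  "relu_vec (affine (L2 a) [z,y,S,C,b1,b2,e6,e7]) =
    (let ws = (S-1)*(cos a - 1) + (C-1)* sin a; wc = (C-1)*(cos a - 1) - (S-1)* sin a; b = b1 - b2 in
    [max 0 z, max 0 (y + a * b), max 0 S, max 0 C,
     max 0 (ws - 2 + 2*b), max 0 (-ws - 2 + 2*b), max 0 (wc - 2 + 2*b), max 0 (-wc - 2 + 2*b)])"
  by (simp add: L2_def relu_vec_def Let_def algebra_simps)

definition L3 :: "layer" where
  "L3 = ([[1,0,0,0,0,0,0,0],[0,1,0,0,0,0,0,0],[0,0,1,0,1,-1,0,0],[0,0,0,1,0,0,1,-1],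
      [0,0,0,0,0,0,0,0],[0,0,0,0,0,0,0,0],[0,0,0,0,0,0,0,0],[0,0,0,0,0,0,0,0]],
     [0,0,0,0,0,0,0,0])"

lemma L3_eval:
  "relu_vec (affine L3 [z,y,S,C,p1,p2,p3,p4]) =
    [max 0 z, max 0 y, max 0 (S + p1 - p2), max 0 (C + p3 - p4), 0, 0, 0, 0]"
  by (simp add: L3_def relu_vec_def algebra_simps)

definition Lin :: "real \<Rightarrow> layer" where
  "Lin d = ([[-1/d],[-1/d],[1],[0],[0],[0],[0],[0]], [0, -1, 2*pi, 0,0,0,0,0])"

lemma Lin_eval:
  "relu_vec (affine (Lin d) [x]) = [max 0 (-x/d), max 0 (-x/d - 1), max 0 (x + 2*pi), 0,0,0,0,0]"
  by (simp add: Lin_def relu_vec_def algebra_simps)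

definition Linit :: "real \<Rightarrow> layer" where
  "Linit t = ([[2*pi,-2*pi,1,0,0,0,0,0],[0,0,0,0,0,0,0,0],[0,0,0,0,0,0,0,0],[0,0,0,0,0,0,0,0],
      [0,0,0,0,0,0,0,0],[0,0,0,0,0,0,0,0],[0,0,0,0,0,0,0,0],[0,0,0,0,0,0,0,0]],
     [-2*pi, xt t, sin (xt t) + 1, cos (xt t) + 1, 0,0,0,0])"

lemma Linit_eval:
  "relu_vec (affine (Linit t) [p1,p2,p3,e3,e4,e5,e6,e7]) =
    [max 0 (p3 - 2*pi + 2*pi*(p1 - p2)), max 0 (xt t), max 0 (sin (xt t) + 1), max 0 (cos (xt t) + 1), 0,0,0,0]"
  by (simp add: Linit_def relu_vec_def algebra_simps)

definition Lfin :: "layer" where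
  "Lfin = ([[0,0,-1,0,0,0,0,0],[0,0,-1,0,0,0,0,0],[0,0,0,0,0,0,0,0],[0,0,0,0,0,0,0,0],
      [0,0,0,0,0,0,0,0],[0,0,0,0,0,0,0,0],[0,0,0,0,0,0,0,0],[0,0,0,0,0,0,0,0]],
     [2,0,0,0,0,0,0,0])"

definition Lout :: "layer" where
  "Lout = ([[1,-1,0,0,0,0,0,0]], [-1])"

lemma fin_eval:
  "realize_layers [Lfin, Lout] v =
     (let e = (\<Sum>(a, x)\<leftarrow>zip [0,0,-1,0,0,0,0,0] v. a * x) in [max 0 (e + 2) - max 0 e - 1])"
  by (simp add: Lfin_def Lout_def relu_vec_def Let_def algebra_simps)

definition stp :: "real \<Rightarrow> real \<Rightarrow> real \<Rightarrow> layer list" where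
  "stp t d a = [L1 t d a, L2 a, L3]"

lemma hid_Cons: "hid (l # ls) v = hid ls (relu_vec (affine l v))"
  by (simp add: hid_def)

lemma hid_Nil: "hid [] v = v" by (simp add: hid_def)

lemma hid_append: "hid (as @ bs) v = hid bs (hid as v)"
  by (simp add: hid_def)

lemma step_ok:
  assumes d: "d > 0" and z: "z \<ge> 0" and y: "y \<ge> 0" and a: "a \<ge> 0"
    and cond: "z - Psi t (y + a) \<ge> d \<or> z - Psi t (y + a) \<le> 0"
  shows "hid (stp t d a) [z, y, sin y + 1, cos y + 1, 0,0,0,0] =
    (let y' = (if Psi t (y + a) < z then y + a else y) in [z, y', sin y' + 1, cos y' + 1, 0,0,0,0])"
proof -
  define u where "u = z - Psi t (y + a)"
  have ue: "(z - y - a + t * cos a * (sin y + 1 - 1) + t * sin a * (cos y + 1 - 1))/d = u/d"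
    unfolding u_def Psi_def by (simp add: sin_add algebra_simps)
  have s1: "max 0 (sin y + 1) = sin y + 1" "max 0 (cos y + 1) = cos y + 1"
    proof -
    have "0 \<le> sin y + 1" "0 \<le> cos y + 1" using sin_ge_minus_one[of y] cos_ge_minus_one[of y] by linarith+
    then show "max 0 (sin y + 1) = sin y + 1" "max 0 (cos y + 1) = cos y + 1" by (simp_all add: max_def)
  qed
  define ws where "ws = (sin y + 1 - 1)*(cos a - 1) + (cos y + 1 - 1) * sin a"
  define wc where "wc = (cos y + 1 - 1)*(cos a - 1) - (sin y + 1 - 1) * sin a"
  have wse: "sin y + ws = sin (y + a)" unfolding ws_def by (simp add: sin_add algebra_simps)
  have wce: "cos y + wc = cos (y + a)" unfolding wc_def by (simp add: cos_add algebra_simps)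
  have wsb: "\<bar>ws\<bar> \<le> 2" using wse abs_sin_le_one[of y] abs_sin_le_one[of "y+a"] by linarith
  have wcb: "\<bar>wc\<bar> \<le> 2" using wce abs_cos_le_one[of y] abs_cos_le_one[of "y+a"] by linarith
  have h1: "hid (stp t d a) [z, y, sin y + 1, cos y + 1, 0,0,0,0] =
     hid [L2 a, L3] [z, y, sin y + 1, cos y + 1, max 0 (u/d), max 0 (u/d - 1), 0, 0]"
    unfolding stp_def hid_Cons L1_eval ue using z y s1 by simp
  show ?thesis
  proof (cases "Psi t (y + a) < z")
    case True
    then have "u \<ge> d" using cond unfolding u_def by auto
    then have "u/d \<ge> 1" using d by simp
    then have b: "max 0 (u/d) - max 0 (u/d - 1) = 1" by simp
    have "hid [L2 a, L3] [z, y, sin y + 1, cos y + 1, max 0 (u/d), max 0 (u/d - 1), 0, 0]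
       = hid [L3] [z, y + a, sin y + 1, cos y + 1, max 0 ws, max 0 (-ws), max 0 wc, max 0 (-wc)]"
      unfolding hid_Cons L2_eval Let_def b ws_def[symmetric] wc_def[symmetric] using z y a s1 by simp
    also have "\<dots> = [z, y + a, sin (y + a) + 1, cos (y+a) + 1, 0,0,0,0]"
    proof -
      have e1: "sin y + 1 + max 0 ws - max 0 (- ws) = sin (y + a) + 1" using wse by linarith
      have e2: "cos y + 1 + max 0 wc - max 0 (- wc) = cos (y + a) + 1" using wce by linarith
      have m: "max 0 (sin (y + a) + 1) = sin (y + a) + 1" "max 0 (cos (y + a) + 1) = cos (y + a) + 1"
        proof -
        have "0 \<le> sin (y+a) + 1" "0 \<le> cos (y+a) + 1" using sin_ge_minus_one[of "y+a"] cos_ge_minus_one[of "y+a"] by linarith+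
        then show "max 0 (sin (y + a) + 1) = sin (y + a) + 1" "max 0 (cos (y + a) + 1) = cos (y + a) + 1" by (simp_all add: max_def)
      qed
      show ?thesis unfolding hid_Cons L3_eval hid_Nil e1 e2 m using z y a by simp
    qed
    finally show ?thesis using h1 True by (simp add: Let_def)
  next
    case False
    then have "u \<le> 0" using cond unfolding u_def by auto
    then have "u/d \<le> 0" using d by (simp add: divide_nonpos_pos)
    then have b: "max 0 (u/d) = 0" "max 0 (u/d - 1) = 0" by auto
    have "hid [L2 a, L3] [z, y, sin y + 1, cos y + 1, max 0 (u/d), max 0 (u/d - 1), 0, 0]
       = hid [L3] [z, y, sin y + 1, cos y + 1, 0, 0, 0, 0]"
    proof -
      have "max 0 (ws - 2) = 0" "max 0 (-ws - 2) = 0" "max 0 (wc - 2) = 0" "max 0 (-wc - 2) = 0"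
        using wsb wcb by auto
      then show ?thesis
        unfolding hid_Cons L2_eval Let_def b ws_def[symmetric] wc_def[symmetric] using z y a s1 by simp
    qed
    also have "\<dots> = [z, y, sin y + 1, cos y + 1, 0,0,0,0]"
      unfolding hid_Cons L3_eval hid_Nil using z y s1 by simp
    finally show ?thesis using h1 False by (simp add: Let_def)
  qed
qed



definition steps :: "real \<Rightarrow> real \<Rightarrow> nat \<Rightarrow> layer list" where
  "steps t d n = concat (map (\<lambda>j. stp t d (al t j)) [1..<Suc n])"

lemma steps_Suc: "steps t d (Suc n) = steps t d n @ stp t d (al t (Suc n))"
  by (simp add: steps_def)

lemma steps_0: "steps t d 0 = []"
  by (simp add: steps_def)

definition net :: "real \<Rightarrow> real \<Rightarrow> nat \<Rightarrow> layer list" where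
  "net t d n = Lin d # Linit t # steps t d n @ [Lfin, Lout]"

lemma realize_Cons2: "ls \<noteq> [] \<Longrightarrow> realize_layers (l # ls) v = realize_layers ls (relu_vec (affine l v))"
  by (cases ls) auto

lemma realize_append: "rest \<noteq> [] \<Longrightarrow> realize_layers (as @ rest) v = realize_layers rest (hid as v)"
  by (induction as arbitrary: v) (auto simp: hid_Cons hid_Nil realize_Cons2)

lemma net_realize: "realization (net t d n) x = hd (realize_layers [Lfin, Lout] (hid (Lin d # Linit t # steps t d n) [x]))"
  unfolding realization_def net_def
  using realize_append[of "[Lfin, Lout]" "Lin d # Linit t # steps t d n" "[x]"] by simp

lemma net_bound: "\<bar>realization (net t d n) x\<bar> \<le> 1"
proof -
  have "\<And>e::real. \<bar>max 0 (e+2) - max 0 e - 1\<bar> \<le> 1" by (auto simp: max_def)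
  then show ?thesis unfolding net_realize fin_eval Let_def by simp
qed

lemma length_steps: "length (steps t d n) = 3 * n"
  by (induction n) (auto simp: steps_0 steps_Suc stp_def)

lemma depth_net: "depth (net t d n) = 3 * n + 3"
  by (simp add: depth_def net_def length_steps)

lemma steps_rows: "l \<in> set (steps t d n) \<Longrightarrow> length (fst l) = 8"
  by (induction n) (auto simp: steps_0 steps_Suc stp_def L1_def L2_def L3_def Let_def)

lemma width_net: "width (net t d n) \<le> 8"
proof -
  have "\<forall>l\<in>set (butlast (net t d n)). length (fst l) = 8"
    using steps_rows[of _ t d n] by (auto simp: net_def butlast_append Lin_def Linit_def Lfin_def)
  then show ?thesis unfolding width_def by (auto intro!: Max.boundedI)
qed

lemma wf_steps: "wf_from 8 (steps t d n @ rest) = wf_from 8 rest"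
proof (induction n arbitrary: rest)
  case 0 then show ?case by (simp add: steps_0)
next
  case (Suc n)
  have "wf_from 8 (stp t d (al t (Suc n)) @ rest) = wf_from 8 rest"
    by (simp add: stp_def L1_def L2_def L3_def Let_def eval_nat_numeral)
  then show ?case using Suc[of "stp t d (al t (Suc n)) @ rest"] by (simp add: steps_Suc)
qed

lemma valid_net: "valid_net (net t d n)"
proof -
  have a: "wf_from 1 (Lin d # Linit t # X) = wf_from 8 X" for X
    by (simp add: Lin_def Linit_def eval_nat_numeral)
  have b: "wf_from 8 [Lfin, Lout]" by (simp add: Lfin_def Lout_def)
  show ?thesis unfolding valid_net_def net_def using a b wf_steps by simp
qed

lemma sc1: fixes x :: real shows "max 0 (sin x + 1) = sin x + 1" "max 0 (cos x + 1) = cos x + 1"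
  "max 0 (- (sin x + 1)) = 0" "max 0 (2 - (sin x + 1)) = 1 - sin x"
proof -
  have "0 \<le> sin x + 1" "0 \<le> cos x + 1" "sin x \<le> 1" using sin_ge_minus_one[of x] cos_ge_minus_one[of x] sin_le_one[of x] by linarith+
  then show "max 0 (sin x + 1) = sin x + 1" "max 0 (cos x + 1) = cos x + 1"
  "max 0 (- (sin x + 1)) = 0" "max 0 (2 - (sin x + 1)) = 1 - sin x" by (simp_all add: max_def)
qed

definition zz :: "real \<Rightarrow> real" where "zz x = (if x < 0 then x + 2*pi else x)"

lemma front_eval:
  assumes t: "t > 1" and d: "d > 0" and x: "-2*pi \<le> x" "x \<ge> 0 \<or> x \<le> -d"
  shows "hid [Lin d, Linit t] [x] = [zz x, xt t, sin (xt t) + 1, cos (xt t) + 1, 0,0,0,0]"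
proof -
  have m: "max 0 (x + 2*pi) = x + 2*pi" using x by simp
  have s: "max 0 (xt t) = xt t" "max 0 (sin (xt t) + 1) = sin (xt t) + 1" "max 0 (cos (xt t) + 1) = cos (xt t) + 1"
    using xt_prop[OF t] by (simp_all add: sc1)
  have z: "max 0 (x + 2 * pi - 2 * pi + 2 * pi * (max 0 (- x / d) - max 0 (- x / d - 1))) = zz x"
  proof (cases "x \<ge> 0")
    case True
    then have "- x / d \<le> 0" using d by (simp add: divide_nonpos_pos)
    then show ?thesis using True by (simp add: zz_def max_def)
  next
    case False
    then have "x \<le> -d" using x by simp
    then have "- x / d \<ge> 1" using d by (simp add: le_divide_eq divide_le_eq)
    then have "max 0 (- x / d) - max 0 (- x / d - 1) = 1" by simp
    then show ?thesis using False x by (simp add: zz_def)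
  qed
  show ?thesis unfolding hid_Cons hid_Nil Lin_eval m Linit_eval z s by simp
qed

lemma steps_eval:
  assumes t: "t > 1" and d: "d > 0" and z: "0 \<le> z" "z \<le> 2*pi"
    and cond: "\<forall>j<n. z - Psi t (ys t z j + al t (Suc j)) \<ge> d \<or> z - Psi t (ys t z j + al t (Suc j)) \<le> 0"
  shows "hid (steps t d n) [z, xt t, sin (xt t) + 1, cos (xt t) + 1, 0,0,0,0]
       = [z, ys t z n, sin (ys t z n) + 1, cos (ys t z n) + 1, 0,0,0,0]"
  using cond
proof (induction n)
  case 0 then show ?case by (simp add: steps_0 hid_Nil)
next
  case (Suc n)
  have ih: "hid (steps t d n) [z, xt t, sin (xt t) + 1, cos (xt t) + 1, 0,0,0,0]
       = [z, ys t z n, sin (ys t z n) + 1, cos (ys t z n) + 1, 0,0,0,0]" using Suc by auto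
  have y0: "ys t z n \<ge> 0" using bis_inv[OF t z, of n] xt_prop[OF t] by linarith
  have a0: "al t (Suc n) \<ge> 0" unfolding al_def hh_def using xt_prop[OF t] by simp
  have c: "z - Psi t (ys t z n + al t (Suc n)) \<ge> d \<or> z - Psi t (ys t z n + al t (Suc n)) \<le> 0"
    using Suc.prems by auto
  show ?case unfolding steps_Suc hid_append ih step_ok[OF d z(1) y0 a0 c] by (simp add: Let_def)
qed

lemma net_good:
  assumes t: "t > 1" and d: "d > 0" and x: "-2*pi \<le> x" "x \<le> 2*pi" "x \<ge> 0 \<or> x \<le> -d"
    and cond: "\<forall>j<n. zz x - Psi t (ys t (zz x) j + al t (Suc j)) \<ge> d \<or> zz x - Psi t (ys t (zz x) j + al t (Suc j)) \<le> 0"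
  shows "realization (net t d n) x = - sin (ys t (zz x) n)"
proof -
  have z: "0 \<le> zz x" "zz x \<le> 2*pi" using x d unfolding zz_def by auto
  have "hid (Lin d # Linit t # steps t d n) [x] = hid (steps t d n) (hid [Lin d, Linit t] [x])"
    using hid_append[of "[Lin d, Linit t]" "steps t d n" "[x]"] by simp
  also have "\<dots> = [zz x, ys t (zz x) n, sin (ys t (zz x) n) + 1, cos (ys t (zz x) n) + 1, 0,0,0,0]"
    unfolding front_eval[OF t d x(1) x(3)] steps_eval[OF t d z cond] ..
  finally have h: "hid (Lin d # Linit t # steps t d n) [x] = [zz x, ys t (zz x) n, sin (ys t (zz x) n) + 1, cos (ys t (zz x) n) + 1, 0,0,0,0]" .
  have "max 0 (2 - (sin (ys t (zz x) n) + 1)) = 1 - sin (ys t (zz x) n)"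
       "max 0 (- (sin (ys t (zz x) n) + 1)) = 0"
    by (rule sc1)+
  then show ?thesis unfolding net_realize h fin_eval Let_def by (simp add: algebra_simps)
qed



lemma sum_zip: "length r = length v \<Longrightarrow> (\<Sum>(a, x)\<leftarrow>zip r v. a * x) = (\<Sum>j<length r. r!j * v!j)"
proof (induction r arbitrary: v)
  case Nil then show ?case by simp
next
  case (Cons a r)
  then obtain w vs where v: "v = w # vs" by (cases v) auto
  show ?case using Cons v by (simp del: sum.lessThan_Suc add: sum.lessThan_Suc_shift)
qed

definition cont_list :: "(real \<Rightarrow> real list) \<Rightarrow> nat \<Rightarrow> bool" where
  "cont_list F d \<longleftrightarrow> (\<forall>x. length (F x) = d) \<and> (\<forall>i<d. continuous_on UNIV (\<lambda>x. F x ! i))"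

lemma affine_cont:
  assumes "length W = length b" "\<forall>r\<in>set W. length r = d" "cont_list F d"
  shows "cont_list (\<lambda>x. affine (W, b) (F x)) (length W)"
  unfolding cont_list_def
proof safe
  fix x show "length (affine (W, b) (F x)) = length W" using assms by simp
next
  fix i assume i: "i < length W"
  have r: "length (W!i) = d" using assms(2) i by auto
  have "(\<lambda>x. affine (W, b) (F x) ! i) = (\<lambda>x. (\<Sum>j<d. W!i!j * F x!j) + b!i)"
  proof
    fix x
    have "length (F x) = d" using assms(3) unfolding cont_list_def by auto
    then show "affine (W, b) (F x) ! i = (\<Sum>j<d. W!i!j * F x!j) + b!i"
      using i assms(1) r sum_zip[of "W!i" "F x"] by simp
  qed
  moreover have "continuous_on UNIV (\<lambda>x. (\<Sum>j<d. W!i!j * F x!j) + b!i)"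
    using assms(3) unfolding cont_list_def by (intro continuous_intros) auto
  ultimately show "continuous_on UNIV (\<lambda>x. affine (W, b) (F x) ! i)" by (simp only:)
qed

lemma relu_cont: "cont_list F d \<Longrightarrow> cont_list (\<lambda>x. relu_vec (F x)) d"
  unfolding cont_list_def relu_vec_def by (auto intro!: continuous_intros)

lemma realize_cont:
  "wf_from d ls \<Longrightarrow> ls \<noteq> [] \<Longrightarrow> cont_list F d \<Longrightarrow> continuous_on UNIV (\<lambda>x. hd (realize_layers ls (F x)))"
proof (induction ls arbitrary: d F)
  case Nil then show ?case by simp
next
  case (Cons l ls)
  obtain W b where l: "l = (W, b)" by (cases l)
  have wf: "length W = length b" "\<forall>r\<in>set W. length r = d" "wf_from (length W) ls"
    using Cons.prems(1) l by auto
  have ac: "cont_list (\<lambda>x. affine (W, b) (F x)) (length W)" using affine_cont[OF wf(1,2) Cons.prems(3)] .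
  show ?case
  proof (cases ls)
    case Nil
    then have "length W = 1" using wf by simp
    then have "continuous_on UNIV (\<lambda>x. affine (W, b) (F x) ! 0)" using ac unfolding cont_list_def by auto
    moreover have "\<And>x. hd (affine (W, b) (F x)) = affine (W, b) (F x) ! 0"
      using ac \<open>length W = 1\<close> unfolding cont_list_def by (metis hd_conv_nth list.size(3) zero_neq_one)
    ultimately show ?thesis using Nil l by simp
  next
    case (Cons l' ls')
    have "continuous_on UNIV (\<lambda>x. hd (realize_layers ls (relu_vec (affine (W, b) (F x)))))"
      using Cons.IH[OF wf(3)] relu_cont[OF ac] Cons by simp
    then show ?thesis using Cons l by simp
  qed
qed

lemma net_cont: "continuous_on UNIV (realization (net t d n))"
proof -
  have "cont_list (\<lambda>x. [x]) 1" unfolding cont_list_def by (auto intro: continuous_intros)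
  then have "continuous_on UNIV (\<lambda>x. hd (realize_layers (net t d n) [x]))"
    using realize_cont[of 1 "net t d n"] valid_net unfolding valid_net_def by blast
  then show ?thesis unfolding realization_def .
qed



lemma borel_to_lebesgue_on:
  fixes f :: "real \<Rightarrow> real"
  assumes "f \<in> borel_measurable borel"
  shows "f \<in> borel_measurable (lebesgue_on S)"
proof -
  have "f \<in> borel_measurable lborel" using assms by simp
  then have "f \<in> borel_measurable lebesgue" using measurable_completion by blast
  then show ?thesis by (rule measurable_restrict_space1)
qed

definition phi :: "real \<Rightarrow> real \<Rightarrow> real" where
  "phi t z = Psi_inv t (max 0 (min (2*pi) z))"

lemma phi_mono: "t > 1 \<Longrightarrow> mono (phi t)"
  unfolding mono_def phi_def
  by (intro allI impI Psi_inv_mono) (auto simp: max_def min_def)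

definition Uh :: "real \<Rightarrow> real \<Rightarrow> real" where
  "Uh t x = (if x < 0 then - sin (phi t (x + 2*pi)) else - sin (phi t x))"

lemma Uh_eq: "x \<in> {-2*pi..2*pi} \<Longrightarrow> Uh t x = U t x"
  unfolding Uh_def U_def phi_def by (auto simp: max_def min_def)

lemma Uh_meas:
  assumes t: "t > 1"
  shows "Uh t \<in> borel_measurable borel"
proof -
  have p: "phi t \<in> borel_measurable borel" using borel_measurable_mono[OF phi_mono[OF t]] .
  have "(\<lambda>x. - sin (phi t (x + 2*pi))) \<in> borel_measurable borel"
    using p by measurable
  moreover have "(\<lambda>x. - sin (phi t x)) \<in> borel_measurable borel"
    using p by measurable
  ultimately show ?thesis unfolding Uh_def by measurable
qed

lemma net_absint:
  assumes t: "t > 1"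
  shows "(\<lambda>x. realization (net t d n) x - U t x) absolutely_integrable_on {-2*pi..2*pi}"
proof -
  have m: "(\<lambda>x. realization (net t d n) x - Uh t x) \<in> borel_measurable borel"
    using borel_measurable_continuous_onI[OF net_cont] Uh_meas[OF t] by measurable
  have b: "norm (realization (net t d n) x - Uh t x) \<le> 2" for x
  proof -
    have "\<bar>Uh t x\<bar> \<le> 1" unfolding Uh_def by auto
    then show ?thesis using net_bound[of t d n x] by simp
  qed
  have "(\<lambda>x. realization (net t d n) x - Uh t x) absolutely_integrable_on {-2*pi..2*pi}"
    by (rule measurable_bounded_by_integrable_imp_absolutely_integrable[OF borel_to_lebesgue_on[OF m] _ _ b]) auto
  then show ?thesis unfolding absolutely_integrable_on_def
    using integrable_cong[of "{-2*pi..2*pi}" "\<lambda>x. realization (net t d n) x - Uh t x" "\<lambda>x. realization (net t d n) x - U t x"]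
      integrable_cong[of "{-2*pi..2*pi}" "\<lambda>x. norm (realization (net t d n) x - Uh t x)" "\<lambda>x. norm (realization (net t d n) x - U t x)"]
      Uh_eq by auto
qed



lemma sin_lip: fixes a b :: real shows "\<bar>sin a - sin b\<bar> \<le> \<bar>a - b\<bar>"
proof -
  have "\<bar>sin a - sin b\<bar> = 2 * \<bar>sin ((a - b) / 2)\<bar> * \<bar>cos ((a + b) / 2)\<bar>"
    by (simp add: sin_diff_sin abs_mult)
  also have "\<dots> \<le> 2 * \<bar>(a - b) / 2\<bar> * 1"
    by (intro mult_mono abs_sin_x_le_abs_x abs_cos_le_one) auto
  finally show ?thesis by simp
qed

lemma ind_int:
  fixes a b c e :: real
  assumes "c \<le> e"
  shows "(indicator {c..e} :: real \<Rightarrow> real) integrable_on {a..b}"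
    "integral {a..b} (indicator {c..e} :: real \<Rightarrow> real) \<le> e - c"
proof -
  have eq: "(indicator {c..e} :: real \<Rightarrow> real) = (\<lambda>x. if x \<in> {c..e} then (\<lambda>_. 1) x else 0)"
    by (auto simp: indicator_def)
  have I: "{c..e} \<inter> {a..b} = {max c a .. min e b}" by auto
  have h: "((\<lambda>_. 1::real) has_integral measure lborel {max c a .. min e b}) {max c a .. min e b}"
    using has_integral_const_real[of "1::real" "max c a" "min e b"] by simp
  have "((indicator {c..e} :: real \<Rightarrow> real) has_integral measure lborel {max c a .. min e b}) {a..b}"
    unfolding eq using has_integral_restrict_Int[of "{c..e}" "\<lambda>_. 1::real" _ "{a..b}"] h I by simp
  then show "(indicator {c..e} :: real \<Rightarrow> real) integrable_on {a..b}"
    "integral {a..b} (indicator {c..e} :: real \<Rightarrow> real) \<le> e - c"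
    using assms by (auto simp: integral_unique max_def min_def)
qed

definition Pq :: "real \<Rightarrow> nat \<Rightarrow> nat \<Rightarrow> real" where
  "Pq t j k = Psi t (xt t + real k * al t j)"

definition ibad :: "real \<Rightarrow> real \<Rightarrow> nat \<Rightarrow> nat \<Rightarrow> real \<Rightarrow> real" where
  "ibad t d j k x = indicator {Pq t j k .. Pq t j k + d} x + indicator {Pq t j k - 2*pi .. Pq t j k - 2*pi + d} x"

definition gbad :: "real \<Rightarrow> real \<Rightarrow> nat \<Rightarrow> real \<Rightarrow> real" where
  "gbad t d n x = 2 * indicator {-d..0} x + 2 * (\<Sum>j\<in>{1..n}. \<Sum>k<(2::nat)^j. ibad t d j k x)"

lemma ibad_nn: "0 \<le> ibad t d j k x"
  unfolding ibad_def by auto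

lemma ind_nn: "0 \<le> (indicator S x :: real)" by (auto simp: indicator_def)

lemma gbad_nn: "0 \<le> gbad t d n x"
proof -
  have "0 \<le> (\<Sum>j\<in>{1..n}. \<Sum>k<(2::nat)^j. ibad t d j k x)" by (auto intro!: sum_nonneg ibad_nn)
  then show ?thesis unfolding gbad_def using ind_nn[of "{-d..0}" x] by linarith
qed

lemma U_abs: "\<bar>U t x\<bar> \<le> 1"
  unfolding U_def by auto

lemma al_nn: "t > 1 \<Longrightarrow> 0 \<le> al t j"
  unfolding al_def hh_def using xt_prop[of t] by simp

lemma pointwise:
  assumes t: "t > 1" and d: "d > 0" and x: "x \<in> {-2*pi..2*pi}"
  shows "\<bar>realization (net t d n) x - U t x\<bar> \<le> al t n + gbad t d n x"
proof -
  have crude: "\<bar>realization (net t d n) x - U t x\<bar> \<le> 2"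
    using net_bound[of t d n x] U_abs[of t x] by linarith
  have a0: "0 \<le> al t n" using al_nn[OF t] .
  show ?thesis
  proof (cases "-d < x \<and> x < 0")
    case True
    then have "indicator {-d..0} x = (1::real)" by auto
    moreover have "0 \<le> (\<Sum>j\<in>{1..n}. \<Sum>k<(2::nat)^j. ibad t d j k x)"
      by (auto intro!: sum_nonneg ibad_nn)
    ultimately have "gbad t d n x \<ge> 2" unfolding gbad_def by linarith
    then show ?thesis using crude a0 by linarith
  next
    case False
    then have xs: "x \<ge> 0 \<or> x \<le> -d" by auto
    have z: "0 \<le> zz x" "zz x \<le> 2*pi" using x xs d unfolding zz_def by auto
    show ?thesis
    proof (cases "\<forall>j<n. zz x - Psi t (ys t (zz x) j + al t (Suc j)) \<ge> d \<or> zz x - Psi t (ys t (zz x) j + al t (Suc j)) \<le> 0")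
      case True
      have N: "realization (net t d n) x = - sin (ys t (zz x) n)"
        using net_good[OF t d _ _ xs True] x by auto
      have Ux: "U t x = - sin (Psi_inv t (zz x))" unfolding U_def zz_def by auto
      have "\<bar>realization (net t d n) x - U t x\<bar> \<le> \<bar>Psi_inv t (zz x) - ys t (zz x) n\<bar>"
        unfolding N Ux using sin_lip[of "Psi_inv t (zz x)" "ys t (zz x) n"] by simp
      also have "\<dots> \<le> al t n" using bis_inv[OF t z, of n] by auto
      finally show ?thesis using gbad_nn[of t d n x] by linarith
    next
      case False
      then obtain j where j: "j < n" "0 < zz x - Psi t (ys t (zz x) j + al t (Suc j))"
        "zz x - Psi t (ys t (zz x) j + al t (Suc j)) < d" by auto
      obtain m :: nat where m: "m < (2::nat)^j" "ys t (zz x) j = xt t + m * al t j"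
        using ys_grid by blast
      define k where "k = 2*m+1"
      have k: "k < (2::nat)^(Suc j)" using m(1) unfolding k_def by simp
      have q: "ys t (zz x) j + al t (Suc j) = xt t + real k * al t (Suc j)"
        using m(2) al_Suc[of t j] unfolding k_def by (simp add: algebra_simps)
      have P: "0 < zz x - Pq t (Suc j) k" "zz x - Pq t (Suc j) k < d"
        using j(2,3) unfolding Pq_def q by auto
      have ib: "ibad t d (Suc j) k x \<ge> 1"
      proof (cases "x < 0")
        case True
        then have "x \<in> {Pq t (Suc j) k - 2*pi .. Pq t (Suc j) k - 2*pi + d}" using P unfolding zz_def by auto
        then show ?thesis unfolding ibad_def by auto
      next
        case False
        then have "x \<in> {Pq t (Suc j) k .. Pq t (Suc j) k + d}" using P unfolding zz_def by auto
        then show ?thesis unfolding ibad_def by auto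
      qed
      have "ibad t d (Suc j) k x \<le> (\<Sum>k<(2::nat)^(Suc j). ibad t d (Suc j) k x)"
        using k by (intro member_le_sum) (auto intro: ibad_nn)
      also have "\<dots> \<le> (\<Sum>j\<in>{1..n}. \<Sum>k<(2::nat)^j. ibad t d j k x)"
        using j(1) by (intro member_le_sum[of "Suc j"]) (auto intro!: sum_nonneg ibad_nn)
      finally have "gbad t d n x \<ge> 2" using ib ind_nn[of "{-d..0}" x] unfolding gbad_def by linarith
      then show ?thesis using crude a0 by linarith
    qed
  qed
qed

lemma ibad_int:
  assumes d: "d > 0"
  shows "ibad t d j k integrable_on {a..b}" "integral {a..b} (ibad t d j k) \<le> 2*d"
proof -
  have i1: "(indicator {Pq t j k .. Pq t j k + d} :: real \<Rightarrow> real) integrable_on {a..b}"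
       "integral {a..b} (indicator {Pq t j k .. Pq t j k + d} :: real \<Rightarrow> real) \<le> d"
    using ind_int[of "Pq t j k" "Pq t j k + d" a b] d by auto
  have i2: "(indicator {Pq t j k - 2*pi .. Pq t j k - 2*pi + d} :: real \<Rightarrow> real) integrable_on {a..b}"
       "integral {a..b} (indicator {Pq t j k - 2*pi .. Pq t j k - 2*pi + d} :: real \<Rightarrow> real) \<le> d"
    using ind_int[of "Pq t j k - 2*pi" "Pq t j k - 2*pi + d" a b] d by auto
  have e: "ibad t d j k = (\<lambda>x. indicator {Pq t j k .. Pq t j k + d} x + indicator {Pq t j k - 2*pi .. Pq t j k - 2*pi + d} x)"
    unfolding ibad_def by (rule ext) simp
  show "ibad t d j k integrable_on {a..b}" unfolding e using i1(1) i2(1) by (rule integrable_add)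
  show "integral {a..b} (ibad t d j k) \<le> 2*d" unfolding e
    using integral_add[OF i1(1) i2(1)] i1(2) i2(2) by simp
qed

lemma gbad_int:
  assumes d: "d > 0"
  shows "gbad t d n integrable_on {a..b}" "integral {a..b} (gbad t d n) \<le> 2*d + 4*d*n*2^n"
proof -
  define G where "G = (\<lambda>x. \<Sum>j\<in>{1..n}. \<Sum>k<(2::nat)^j. ibad t d j k x)"
  have Gi: "G integrable_on {a..b}" unfolding G_def
    by (intro integrable_sum ibad_int[OF d] finite_atLeastAtMost finite_lessThan) 
  have "integral {a..b} G = (\<Sum>j\<in>{1..n}. \<Sum>k<(2::nat)^j. integral {a..b} (ibad t d j k))"
    unfolding G_def
    by (subst integral_sum) (auto intro!: integrable_sum ibad_int[OF d] sum.cong integral_sum)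
  also have "\<dots> \<le> (\<Sum>j\<in>{1..n}. \<Sum>k<(2::nat)^j. 2*d)"
    by (intro sum_mono ibad_int[OF d])
  also have "\<dots> = (\<Sum>j\<in>{1..n}. 2^j * (2*d))" by simp
  also have "\<dots> \<le> (\<Sum>j\<in>{1..n}. 2^n * (2*d))"
    using d by (intro sum_mono mult_right_mono power_increasing) auto
  also have "\<dots> = 2*d*n*2^n" by simp
  finally have GI: "integral {a..b} G \<le> 2*d*n*2^n" .
  have I0: "(indicator {-d..0} :: real \<Rightarrow> real) integrable_on {a..b}"
       "integral {a..b} (indicator {-d..0} :: real \<Rightarrow> real) \<le> d"
    using ind_int[of "-d" 0 a b] d by auto
  have e: "gbad t d n = (\<lambda>x. 2 * indicator {-d..0} x + 2 * G x)"
    unfolding gbad_def G_def by (rule ext) simp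
  have i1: "(\<lambda>x. 2 * (indicator {-d..0} x :: real)) integrable_on {a..b}"
    using integrable_on_cmult_left[OF I0(1), of 2] by simp
  have i2: "(\<lambda>x. 2 * G x) integrable_on {a..b}"
    using integrable_on_cmult_left[OF Gi, of 2] by simp
  show "gbad t d n integrable_on {a..b}" unfolding e using i1 i2 by (rule integrable_add)
  have "integral {a..b} (gbad t d n) = 2 * integral {a..b} (indicator {-d..0} :: real \<Rightarrow> real) + 2 * integral {a..b} G"
    unfolding e using integral_add[OF i1 i2] by simp
  then show "integral {a..b} (gbad t d n) \<le> 2*d + 4*d*n*2^n" using I0(2) GI by linarith
qed

lemma net_L1:
  assumes t: "t > 1" and d: "d > 0"
  shows "integral {-2*pi..2*pi} (\<lambda>x. \<bar>realization (net t d n) x - U t x\<bar>) \<le> 4*pi*al t n + 2*d + 4*d*n*2^n"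
proof -
  have fi: "(\<lambda>x. \<bar>realization (net t d n) x - U t x\<bar>) integrable_on {-2*pi..2*pi}"
    using net_absint[OF t, of d n] unfolding absolutely_integrable_on_def by simp
  have ci: "((\<lambda>x. al t n) has_integral (4*pi*al t n)) {-2*pi..2*pi}"
    using has_integral_const_real[of "al t n" "-2*pi" "2*pi"] by simp
  have gi: "(\<lambda>x. al t n + gbad t d n x) integrable_on {-2*pi..2*pi}"
    using integrable_add[OF has_integral_integrable[OF ci] gbad_int(1)[OF d]] by simp
  have "integral {-2*pi..2*pi} (\<lambda>x. \<bar>realization (net t d n) x - U t x\<bar>)
       \<le> integral {-2*pi..2*pi} (\<lambda>x. al t n + gbad t d n x)"
    by (rule integral_le[OF fi gi]) (rule pointwise[OF t d])
  also have "\<dots> = 4*pi*al t n + integral {-2*pi..2*pi} (gbad t d n)"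
    using integral_add[OF has_integral_integrable[OF ci] gbad_int(1)[OF d]] integral_unique[OF ci] by simp
  also have "\<dots> \<le> 4*pi*al t n + 2*d + 4*d*n*2^n" using gbad_int(2)[OF d] by simp
  finally show ?thesis .
qed



lemma ln2_ge: "ln 2 \<ge> (1/2::real)"
proof -
  have "exp (1/2::real) ^ 2 = exp 1" by (simp add: exp_double[symmetric])
  then have "exp (1/2::real) ^ 2 < 2^2" using exp_le by simp
  then have "exp (1/2::real) < 2" by (rule power_less_imp_less_base) simp
  then show ?thesis using ln_ge_iff[of 2 "1/2"] by simp
qed

theorem mainTheorem18:
  fixes t :: real
  assumes "t > 1"
  shows "\<exists>C>0. \<forall>\<epsilon>::real. 0 < \<epsilon> \<and> \<epsilon> \<le> 1/2 \<longrightarrow>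
           (\<exists>N. valid_net N
                \<and> real (depth N) \<le> C * (ln (1/\<epsilon>))^2
                \<and> real (width N) \<le> C
                \<and> (\<lambda>x. realization N x - U t x) absolutely_integrable_on {-2*pi..2*pi}
                \<and> integral {-2*pi..2*pi} (\<lambda>x. \<bar>realization N x - U t x\<bar>) \<le> \<epsilon>)"
proof (intro exI[of _ 300] conjI allI impI)
  fix e :: real assume e: "0 < e \<and> e \<le> 1/2"
  define lam where "lam = ln (1/e)"
  define r where "r = lam / ln 2"
  define L where "L = nat \<lceil>r\<rceil>"
  define n where "n = 9 * L"
  define d where "d = e / (16 * (real n + 1) * 2^n)"
  have ln2: "ln 2 > (0::real)" "ln (2::real) \<ge> 1/2" using ln2_ge by auto
  have "2 \<le> 1/e" using e by (simp add: field_simps)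
  then have lam2: "lam \<ge> ln 2" unfolding lam_def using e by (subst ln_le_cancel_iff) auto
  have r1: "r \<ge> 1" unfolding r_def using lam2 ln2 by simp
  have rL: "real L \<ge> r" "real L \<le> r + 1" unfolding L_def using r1 by linarith+
  have L1: "L \<ge> 1" using rL r1 by linarith
  have "lam \<le> real L * ln 2" using rL(1) ln2 unfolding r_def by (simp add: divide_le_eq)
  then have "exp lam \<le> exp (real L * ln 2)" by simp
  then have pL: "1/e \<le> 2^L" unfolding lam_def using e by (simp add: exp_of_nat_mult exp_ln_iff)
  have "(2::real)^n = 2^L * 2^(8*L)" unfolding n_def by (simp add: power_add[symmetric])
  moreover have "(2::real)^(8*L) \<ge> 2^8" using L1 by (intro power_increasing) auto
  moreover have "(1/e) * 2^8 \<le> (2::real)^L * 2^(8*L)"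
    using pL \<open>(2::real)^(8*L) \<ge> 2^8\<close> e by (intro mult_mono) auto
  ultimately have pn: "(2::real)^n \<ge> 256 / e" by simp
  have dpos: "d > 0" unfolding d_def using e by simp
  have lpos: "lam > 0" using lam2 ln2 by linarith
  show "\<exists>N. valid_net N
                \<and> real (depth N) \<le> 300 * (ln (1/e))^2
                \<and> real (width N) \<le> 300
                \<and> (\<lambda>x. realization N x - U t x) absolutely_integrable_on {-2*pi..2*pi}
                \<and> integral {-2*pi..2*pi} (\<lambda>x. \<bar>realization N x - U t x\<bar>) \<le> e"
  proof (intro exI[of _ "net t d n"] conjI)
    show "valid_net (net t d n)" by (rule valid_net)
    have "r \<le> 2 * lam" unfolding r_def using ln2 lpos by (simp add: divide_le_eq) 
    then have "r^2 \<le> (2*lam)^2" using r1 by (intro power_mono) auto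
    also have "(2*lam)^2 = 4 * lam^2" by (simp add: power2_eq_square)
    finally have "r^2 \<le> 4 * lam^2" .
    moreover have "r \<le> r^2" using r1 by (simp add: power2_eq_square)
    moreover have "real (depth (net t d n)) = 27 * real L + 3" unfolding depth_net n_def by simp
    moreover have "0 \<le> lam^2" by simp
    ultimately have "real (depth (net t d n)) \<le> 300 * lam^2"
      using rL r1 by linarith
    then show "real (depth (net t d n)) \<le> 300 * (ln (1/e))^2" unfolding lam_def .
    show "real (width (net t d n)) \<le> 300" using width_net[of t d n] by simp
    show "(\<lambda>x. realization (net t d n) x - U t x) absolutely_integrable_on {-2*pi..2*pi}"
      by (rule net_absint[OF assms])
    have al: "al t n \<le> 2*pi / 2^n" unfolding al_def hh_def using xt_prop[OF assms]
      by (simp add: divide_right_mono)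
    have p2: "(0::real) < 2^n" by simp
    have "4*pi*al t n \<le> 4*pi*(2*pi/2^n)" using al pi_gt_zero by (intro mult_left_mono) auto
    also have "\<dots> = 8*pi^2 / 2^n" by (simp add: power2_eq_square)
    also have "\<dots> \<le> 8*pi^2 / (256/e)" using pn e by (intro divide_left_mono) auto
    also have "\<dots> = e * (8 * pi^2) / 256" using e by simp
    also have "\<dots> \<le> e * 128 / 256"
    proof -
      have "pi^2 \<le> 4^2" using pi_less_4 pi_gt_zero by (intro power_mono) auto
      then show ?thesis using e by (intro divide_right_mono mult_left_mono) auto
    qed
    finally have A: "4*pi*al t n \<le> e/2" by simp
    have "2*d + 4*d*n*2^n \<le> 4*d*(real n+1)*2^n"
    proof -
      have "(1::real) \<le> 2^n" by (simp add: one_le_power)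
      then have "2*d*1 \<le> 2*d*2^n" using dpos by (intro mult_left_mono) auto
      moreover have "0 \<le> d*2^n" using dpos by simp
      ultimately have "2*d \<le> 4*d*2^n" by linarith
      then show ?thesis by (simp add: algebra_simps)
    qed
    also have "\<dots> = e/4"
    proof -
      have "(16 * (real n + 1) * 2^n) \<noteq> 0" by simp
      then show ?thesis unfolding d_def by (simp add: field_simps)
    qed
    finally have B: "2*d + 4*d*n*2^n \<le> e/4" .
    show "integral {-2*pi..2*pi} (\<lambda>x. \<bar>realization (net t d n) x - U t x\<bar>) \<le> e"
      using net_L1[OF assms dpos, of n] A B e by linarith
  qed
qed simp

end
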